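(* Let $\widetilde{\mathfrak g}$ be an affine Kac–Moody algebra over an algebraically closed field $K$ of characteristic $0$. Then every commutative $2$-cocycle $\varphi$ on $\widetilde{\mathfrak g}$ is trivial, i.e. $\varphi([\widetilde{\mathfrak g},\widetilde{\mathfrak g}],\widetilde{\mathfrak g})=0$.
   Context: A commutative $2$-cocycle on a Lie algebra $L$ over $K$ is a symmetric bilinear form $\varphi:L\times L\to K$ such that $\varphi([x,y],z)+\varphi([z,x],y)+\varphi([y,z],x)=0$ for all $x,y,z\in L$; it is called trivial if it vanishes whenever one argument lies in $[L,L]$. Affine Kac–Moody algebras are taken in the standard realization: for a simple finite-dimensional Lie algebra $\mathfrak g=\bigoplus_{j\in\mathbb Z_n}\mathfrak g_j$ with a $\mathbb Z_n$-grading (coming from a diagram automorphism of order $n$; $n=1$ in the non-twisted case), let $L(\mathfrak g,n)=\bigoplus_{i\in\mathbb Z}\mathfrak g_{i\bmod n}\otimes t^i\subseteq\mathfrak g\otimes K[t,t^{-1}]$, let $\widehat L(\mathfrak g,n)$ be its standard non-split one-dimensional central extension, and the affine Kac–Moody algebra is $\widehat L(\mathfrak g,n)\oplus Kt\frac{d}{dt}$, where $t\frac{d}{dt}$ acts as a derivation of the Laurent polynomials. *)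

theory Defs
  imports Main "HOL-Computational_Algebra.Polynomial"
begin

definition alg_closed :: "'k::field itself \<Rightarrow> bool" where
  "alg_closed _ \<longleftrightarrow> (\<forall>p :: 'k poly. degree p > 0 \<longrightarrow> (\<exists>x. poly p x = 0))"

definition lie_algebra :: "('k::field \<Rightarrow> 'g::ab_group_add \<Rightarrow> 'g) \<Rightarrow> ('g \<Rightarrow> 'g \<Rightarrow> 'g) \<Rightarrow> bool" where
  "lie_algebra scale br \<longleftrightarrow> vector_space scale
     \<and> (\<forall>x y z. br (x + y) z = br x z + br y z)
     \<and> (\<forall>a x y. br (scale a x) y = scale a (br x y))
     \<and> (\<forall>x. br x x = 0)
     \<and> (\<forall>x y z. br x (br y z) + br y (br z x) + br z (br x y) = 0)"

definition finite_dim :: "('k::field \<Rightarrow> 'g::ab_group_add \<Rightarrow> 'g) \<Rightarrow> bool" where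
  "finite_dim scale \<longleftrightarrow> (\<exists>S. finite S \<and> module.span scale S = UNIV)"

definition lie_ideal :: "('k::field \<Rightarrow> 'g::ab_group_add \<Rightarrow> 'g) \<Rightarrow> ('g \<Rightarrow> 'g \<Rightarrow> 'g) \<Rightarrow> 'g set \<Rightarrow> bool" where
  "lie_ideal scale br J \<longleftrightarrow> module.subspace scale J \<and> (\<forall>x y. y \<in> J \<longrightarrow> br x y \<in> J)"

definition lie_subalgebra :: "('k::field \<Rightarrow> 'g::ab_group_add \<Rightarrow> 'g) \<Rightarrow> ('g \<Rightarrow> 'g \<Rightarrow> 'g) \<Rightarrow> 'g set \<Rightarrow> bool" where
  "lie_subalgebra scale br S \<longleftrightarrow> module.subspace scale S \<and> (\<forall>x\<in>S. \<forall>y\<in>S. br x y \<in> S)"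

definition simple_fd_lie_algebra :: "('k::field \<Rightarrow> 'g::ab_group_add \<Rightarrow> 'g) \<Rightarrow> ('g \<Rightarrow> 'g \<Rightarrow> 'g) \<Rightarrow> bool" where
  "simple_fd_lie_algebra scale br \<longleftrightarrow> lie_algebra scale br \<and> finite_dim scale
     \<and> (\<exists>x y. br x y \<noteq> 0)
     \<and> (\<forall>J. lie_ideal scale br J \<longrightarrow> J = {0} \<or> J = UNIV)"

definition chevalley_generators ::
  "('k::field \<Rightarrow> 'g::ab_group_add \<Rightarrow> 'g) \<Rightarrow> ('g \<Rightarrow> 'g \<Rightarrow> 'g) \<Rightarrow> nat set \<Rightarrow> (nat \<Rightarrow> 'g) \<Rightarrow> (nat \<Rightarrow> 'g) \<Rightarrow> bool" where
  "chevalley_generators scale br I e f \<longleftrightarrow>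
     (let h = (\<lambda>i. br (e i) (f i)) in
       finite I \<and> I \<noteq> {}
     \<and> (\<forall>S. lie_subalgebra scale br S \<and> e ` I \<union> f ` I \<subseteq> S \<longrightarrow> S = UNIV)
     \<and> inj_on h I \<and> \<not> module.dependent scale (h ` I)
     \<and> (\<forall>i\<in>I. \<forall>j\<in>I. i \<noteq> j \<longrightarrow> br (e i) (f j) = 0)
     \<and> (\<forall>i\<in>I. \<forall>j\<in>I. br (h i) (h j) = 0)
     \<and> (\<exists>A :: nat \<Rightarrow> nat \<Rightarrow> int. \<forall>i\<in>I. \<forall>j\<in>I.
           A i i = 2
         \<and> (i \<noteq> j \<longrightarrow> A i j \<le> 0 \<and> (A i j = 0 \<longleftrightarrow> A j i = 0))
         \<and> br (h i) (e j) = scale (of_int (A i j)) (e j)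
         \<and> br (h i) (f j) = scale (- of_int (A i j)) (f j)))"

definition lie_automorphism :: "('k::field \<Rightarrow> 'g::ab_group_add \<Rightarrow> 'g) \<Rightarrow> ('g \<Rightarrow> 'g \<Rightarrow> 'g) \<Rightarrow> ('g \<Rightarrow> 'g) \<Rightarrow> bool" where
  "lie_automorphism scale br \<sigma> \<longleftrightarrow> bij \<sigma>
     \<and> (\<forall>x y. \<sigma> (x + y) = \<sigma> x + \<sigma> y) \<and> (\<forall>a x. \<sigma> (scale a x) = scale a (\<sigma> x))
     \<and> (\<forall>x y. \<sigma> (br x y) = br (\<sigma> x) (\<sigma> y))"

definition diagram_automorphism :: "('k::field \<Rightarrow> 'g::ab_group_add \<Rightarrow> 'g) \<Rightarrow> ('g \<Rightarrow> 'g \<Rightarrow> 'g) \<Rightarrow> ('g \<Rightarrow> 'g) \<Rightarrow> nat \<Rightarrow> bool" where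
  "diagram_automorphism scale br \<sigma> n \<longleftrightarrow> lie_automorphism scale br \<sigma>
     \<and> n > 0 \<and> \<sigma> ^^ n = id \<and> (\<forall>k. 0 < k \<and> k < n \<longrightarrow> \<sigma> ^^ k \<noteq> id)
     \<and> (\<exists>I e f \<pi>. chevalley_generators scale br I e f \<and> bij_betw \<pi> I I
          \<and> (\<forall>i\<in>I. \<sigma> (e i) = e (\<pi> i) \<and> \<sigma> (f i) = f (\<pi> i)))"

definition primitive_root :: "'k::field \<Rightarrow> nat \<Rightarrow> bool" where
  "primitive_root \<epsilon> n \<longleftrightarrow> n > 0 \<and> \<epsilon> ^ n = 1 \<and> (\<forall>k. 0 < k \<and> k < n \<longrightarrow> \<epsilon> ^ k \<noteq> 1)"

text \<open>Nondegenerate symmetric invariant bilinear form on g (for simple g: a nonzero multiple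
  of the Killing form); it defines the standard central extension.\<close>
definition invariant_form :: "('k::field \<Rightarrow> 'g::ab_group_add \<Rightarrow> 'g) \<Rightarrow> ('g \<Rightarrow> 'g \<Rightarrow> 'g) \<Rightarrow> ('g \<Rightarrow> 'g \<Rightarrow> 'k) \<Rightarrow> bool" where
  "invariant_form scale br B \<longleftrightarrow>
       (\<forall>x y z. B (x + y) z = B x z + B y z) \<and> (\<forall>a x y. B (scale a x) y = a * B x y)
     \<and> (\<forall>x y. B x y = B y x)
     \<and> (\<forall>x y z. B (br x y) z = B x (br y z))
     \<and> (\<forall>x. (\<forall>y. B x y = 0) \<longrightarrow> x = 0)"

definition grade :: "('k::field \<Rightarrow> 'g::ab_group_add \<Rightarrow> 'g) \<Rightarrow> ('g \<Rightarrow> 'g) \<Rightarrow> nat \<Rightarrow> 'k \<Rightarrow> int \<Rightarrow> 'g set" where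
  "grade scale \<sigma> n \<epsilon> j = {x. \<sigma> x = scale (\<epsilon> ^ nat (j mod int n)) x}"

text \<open>The affine Kac-Moody algebra: an element (a, c, d) stands for
  sum_i a_i (x) t^i + c K + d (t d/dt), with a_i in g_(i mod n), finitely many nonzero.\<close>
type_synonym ('g, 'k) aff = "(int \<Rightarrow> 'g) \<times> 'k \<times> 'k"

definition aff_carrier :: "('k::field \<Rightarrow> 'g::ab_group_add \<Rightarrow> 'g) \<Rightarrow> ('g \<Rightarrow> 'g) \<Rightarrow> nat \<Rightarrow> 'k \<Rightarrow> ('g, 'k) aff set" where
  "aff_carrier scale \<sigma> n \<epsilon> =
     {(a, c, d). finite {i. a i \<noteq> 0} \<and> (\<forall>i. a i \<in> grade scale \<sigma> n \<epsilon> i)}"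

definition aff_add :: "('g::ab_group_add, 'k::field) aff \<Rightarrow> ('g, 'k) aff \<Rightarrow> ('g, 'k) aff" where
  "aff_add x y = (case x of (a, c, d) \<Rightarrow> case y of (b, c', d') \<Rightarrow>
     ((\<lambda>i. a i + b i), c + c', d + d'))"

definition aff_scale :: "('k::field \<Rightarrow> 'g::ab_group_add \<Rightarrow> 'g) \<Rightarrow> 'k \<Rightarrow> ('g, 'k) aff \<Rightarrow> ('g, 'k) aff" where
  "aff_scale scale r x = (case x of (a, c, d) \<Rightarrow> ((\<lambda>i. scale r (a i)), r * c, r * d))"

text \<open>[x t^i, y t^j] = [x,y] t^(i+j) + i delta_(i+j,0) B(x,y) K,
  [t d/dt, x t^i] = i x t^i, K central.\<close>
definition aff_bracket :: "('k::field \<Rightarrow> 'g::ab_group_add \<Rightarrow> 'g) \<Rightarrow> ('g \<Rightarrow> 'g \<Rightarrow> 'g) \<Rightarrow> ('g \<Rightarrow> 'g \<Rightarrow> 'k)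
     \<Rightarrow> ('g, 'k) aff \<Rightarrow> ('g, 'k) aff \<Rightarrow> ('g, 'k) aff" where
  "aff_bracket scale br B x y = (case x of (a, c, d) \<Rightarrow> case y of (b, c', d') \<Rightarrow>
     ((\<lambda>k. (\<Sum>i\<in>{i. a i \<noteq> 0}. br (a i) (b (k - i)))
            + scale (d * of_int k) (b k) - scale (d' * of_int k) (a k)),
      (\<Sum>i\<in>{i. a i \<noteq> 0}. of_int i * B (a i) (b (- i))),
      0))"

definition comm_2_cocycle :: "'a set \<Rightarrow> ('a \<Rightarrow> 'a \<Rightarrow> 'a) \<Rightarrow> ('k::field \<Rightarrow> 'a \<Rightarrow> 'a)
     \<Rightarrow> ('a \<Rightarrow> 'a \<Rightarrow> 'a) \<Rightarrow> ('a \<Rightarrow> 'a \<Rightarrow> 'k) \<Rightarrow> bool" where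
  "comm_2_cocycle L add sc br \<phi> \<longleftrightarrow>
       (\<forall>x\<in>L. \<forall>y\<in>L. \<forall>z\<in>L. \<phi> (add x y) z = \<phi> x z + \<phi> y z)
     \<and> (\<forall>r. \<forall>x\<in>L. \<forall>y\<in>L. \<phi> (sc r x) y = r * \<phi> x y)
     \<and> (\<forall>x\<in>L. \<forall>y\<in>L. \<phi> x y = \<phi> y x)
     \<and> (\<forall>x\<in>L. \<forall>y\<in>L. \<forall>z\<in>L. \<phi> (br x y) z + \<phi> (br z x) y + \<phi> (br y z) x = 0)"

end

theory Submission
  imports Defs
begin



lemma neg3: "(a::'a::ab_group_add) + b + c = 0 \<Longrightarrow> - c + - b + - a = 0"
proof -
  assume h: "a + b + c = 0"
  have "- c + - b + - a = - (a + b + c)" by (simp add: algebra_simps)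
  thus ?thesis using h by simp
qed

locale ctx = V: vector_space scale
  for scale :: "'k::field_char_0 \<Rightarrow> 'g::ab_group_add \<Rightarrow> 'g" +
  fixes br :: "'g \<Rightarrow> 'g \<Rightarrow> 'g" and \<sigma> :: "'g \<Rightarrow> 'g" and n :: nat and \<epsilon> :: 'k
    and B :: "'g \<Rightarrow> 'g \<Rightarrow> 'k"
  assumes br_add: "br (x + y) z = br x z + br y z"
    and br_scale: "br (scale a x) y = scale a (br x y)"
    and br_self: "br x x = 0"
    and jacobi: "br x (br y z) + br y (br z x) + br z (br x y) = 0"
    and simple: "\<And>J. lie_ideal scale br J \<Longrightarrow> J = {0} \<or> J = UNIV"
    and nonab: "\<exists>x y. br x y \<noteq> 0"
    and sig_add: "\<sigma> (x + y) = \<sigma> x + \<sigma> y"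
    and sig_scale: "\<sigma> (scale a x) = scale a (\<sigma> x)"
    and sig_br: "\<sigma> (br x y) = br (\<sigma> x) (\<sigma> y)"
    and n_pos: "n > 0" and sig_n: "\<sigma> ^^ n = id"
    and eps_n: "\<epsilon> ^ n = 1" and eps_prim: "\<And>k. 0 < k \<Longrightarrow> k < n \<Longrightarrow> \<epsilon> ^ k \<noteq> 1"
    and B_add: "B (x + y) z = B x z + B y z" and B_scale: "B (scale a x) y = a * B x y"
    and B_sym: "B x y = B y x" and B_inv: "B (br x y) z = B x (br y z)"
    and B_nd: "\<And>x. (\<forall>y. B x y = 0) \<Longrightarrow> x = 0"
begin

lemma B_add2: "B x (y + z) = B x y + B x z"
  by (simp only: B_sym[of x] B_add)
lemma B_scale2: "B x (scale a y) = a * B x y"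
  by (simp only: B_sym[of x] B_scale)
lemma B_zero[simp]: "B 0 y = 0" "B y 0 = 0"
proof -
  show "B 0 y = 0" using B_add[of 0 0 y] by simp
  thus "B y 0 = 0" by (simp add: B_sym)
qed

lemma br_add2: "br x (y + z) = br x y + br x z"
proof -
  have "\<forall>w. B (br x (y + z) - (br x y + br x z)) w = 0"
  proof
    fix w
    have d: "B (a - b) w = B a w - B b w" for a b
      using B_add[of "a - b" b w] by simp
    have "B (br x (y+z)) w = B (br x y) w + B (br x z) w"
      by (simp only: B_inv br_add B_add2)
    thus "B (br x (y + z) - (br x y + br x z)) w = 0" by (simp add: d B_add)
  qed
  from B_nd[OF this] show ?thesis by simp
qed

lemma br_scale2: "br x (scale a y) = scale a (br x y)"
proof -
  have "\<forall>w. B (br x (scale a y) - scale a (br x y)) w = 0"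
  proof
    fix w
    have d: "B (a - b) w = B a w - B b w" for a b
      using B_add[of "a - b" b w] by simp
    have "B (br x (scale a y)) w = a * B (br x y) w"
      by (simp only: B_inv br_scale B_scale2)
    thus "B (br x (scale a y) - scale a (br x y)) w = 0" by (simp add: d B_scale)
  qed
  from B_nd[OF this] show ?thesis by simp
qed

lemma br_zero[simp]: "br 0 x = 0" "br x 0 = 0"
  using br_add[of 0 0 x] br_add2[of x 0 0] by simp_all

lemma br_anti: "br x y = - br y x"
proof -
  have "0 = br (x+y) (x+y)" by (simp add: br_self)
  also have "\<dots> = br x x + br x y + (br y x + br y y)" by (simp add: br_add br_add2 add.assoc)
  finally have "br x y + br y x = 0" by (simp add: br_self)
  thus ?thesis by (simp add: eq_neg_iff_add_eq_0)
qed

lemma br_minus: "br (- x) y = - br x y" "br x (- y) = - br x y"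
proof -
  have "br (- x) y + br x y = 0" using br_add[of "-x" x y] by simp
  thus "br (- x) y = - br x y" by (simp add: eq_neg_iff_add_eq_0)
  have "br x (- y) + br x y = 0" using br_add2[of x "-y" y] by simp
  thus "br x (- y) = - br x y" by (simp add: eq_neg_iff_add_eq_0)
qed
lemma br_diff: "br (x - y) z = br x z - br y z" "br x (y - z) = br x y - br x z"
  using br_add[of x "-y" z] br_add2[of x y "-z"] by (simp_all add: br_minus)

lemma br_sum: "br (sum f S) y = (\<Sum>i\<in>S. br (f i) y)" "br y (sum f S) = (\<Sum>i\<in>S. br y (f i))"
  by (induction S rule: infinite_finite_induct, auto simp: br_add br_add2)

lemma jacobi2: "br (br x y) z + br (br z x) y + br (br y z) x = 0"
proof -
  have 1: "br (br x y) z = - br z (br x y)" by (rule br_anti)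
  have 2: "br (br z x) y = - br y (br z x)" by (rule br_anti)
  have 3: "br (br y z) x = - br x (br y z)" by (rule br_anti)
  show ?thesis unfolding 1 2 3 using jacobi[of x y z] by (rule neg3)
qed

lemma B_cyc1: "B (br z x) y = B (br x y) z"
  using B_inv[of z x y] B_sym[of z "br x y"] by simp
lemma B_cyc2: "B (br y z) x = B (br x y) z"
  using B_inv[of y z x] B_sym[of y "br z x"] B_cyc1 by simp

end



context ctx begin

definition E :: "int \<Rightarrow> 'k" where "E i = \<epsilon> ^ nat (i mod int n)"
definition gr :: "int \<Rightarrow> 'g set" where "gr i = {x. \<sigma> x = scale (E i) x}"

lemma gr_eq: "gr i = grade scale \<sigma> n \<epsilon> i"
  by (simp add: gr_def grade_def E_def)

lemma eps_pow_mod: "\<epsilon> ^ k = \<epsilon> ^ (k mod n)"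
proof -
  have "\<epsilon> ^ k = \<epsilon> ^ (n * (k div n) + k mod n)" by (simp only: mult_div_mod_eq)
  also have "\<dots> = (\<epsilon> ^ n) ^ (k div n) * \<epsilon> ^ (k mod n)" by (simp only: power_add power_mult)
  finally show ?thesis by (simp add: eps_n)
qed

lemma E_eq: assumes "int k mod int n = i mod int n" shows "E i = \<epsilon> ^ k"
proof -
  have "nat (i mod int n) = k mod n" using assms by (simp add: zmod_int[symmetric] nat_int)
  hence "E i = \<epsilon> ^ (k mod n)" by (simp add: E_def)
  thus ?thesis by (simp add: eps_pow_mod[of k])
qed

lemma E_nat: "E (int k) = \<epsilon> ^ k" by (rule E_eq) simp

lemma E_add: "E (i + j) = E i * E j"
proof -
  define a where "a = nat (i mod int n)"
  define b where "b = nat (j mod int n)"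
  have ia: "int a = i mod int n" using n_pos by (simp add: a_def)
  have jb: "int b = j mod int n" using n_pos by (simp add: b_def)
  have "int (a + b) mod int n = (i + j) mod int n"
    by (simp add: ia jb mod_add_eq)
  hence "E (i + j) = \<epsilon> ^ (a + b)" by (rule E_eq)
  thus ?thesis by (simp add: power_add E_def a_def b_def)
qed

lemma E_zero[simp]: "E 0 = 1" by (simp add: E_def)

lemma E_mult: "E (i * int j) = E i ^ j"
  by (induction j) (simp_all add: algebra_simps E_add)

lemma E_minus: "E (- i) * E i = 1"
  using E_add[of "-i" i] by simp

lemma E_one_iff: "E i = 1 \<longleftrightarrow> i mod int n = 0"
proof -
  have lt: "nat (i mod int n) < n" using n_pos by (simp add: nat_less_iff)
  show ?thesis
  proof
    assume "E i = 1"
    hence "\<epsilon> ^ nat (i mod int n) = 1" by (simp add: E_def)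
    hence "nat (i mod int n) = 0"
    proof (rule contrapos_pp)
      assume "nat (i mod int n) \<noteq> 0"
      hence "0 < nat (i mod int n)" by simp
      from eps_prim[OF this lt] show "\<epsilon> ^ nat (i mod int n) \<noteq> 1" .
    qed
    thus "i mod int n = 0" using n_pos pos_mod_sign[of "int n" i] by linarith
  next
    assume "i mod int n = 0" thus "E i = 1" by (simp add: E_def)
  qed
qed

lemma E_pow_n: "E i ^ n = 1"
proof -
  have "E i ^ n = E (i * int n)" by (simp add: E_mult)
  also have "\<dots> = 1" by (subst E_one_iff) simp
  finally show ?thesis .
qed

lemma gr_mod: "i mod int n = j mod int n \<Longrightarrow> gr i = gr j"
  by (simp add: gr_def E_def)

lemma gr_shift: "gr (i + int n * k) = gr i"
  by (rule gr_mod) simp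

lemma sig_zero[simp]: "\<sigma> 0 = 0" using sig_add[of 0 0] by simp
lemma sig_minus: "\<sigma> (- x) = - \<sigma> x"
  using sig_add[of x "-x"] by (simp add: eq_neg_iff_add_eq_0 add.commute)
lemma sig_sum: "\<sigma> (sum f S) = (\<Sum>i\<in>S. \<sigma> (f i))"
  by (induction S rule: infinite_finite_induct) (simp_all add: sig_add)
lemma sigp_add: "(\<sigma>^^j) (x + y) = (\<sigma>^^j) x + (\<sigma>^^j) y"
  by (induction j) (simp_all add: sig_add)
lemma sigp_scale: "(\<sigma>^^j) (scale a x) = scale a ((\<sigma>^^j) x)"
  by (induction j) (simp_all add: sig_scale)
lemma sigp_zero[simp]: "(\<sigma>^^j) 0 = 0"
  by (induction j) simp_all
lemma sigp_sum: "(\<sigma>^^j) (sum f S) = (\<Sum>i\<in>S. (\<sigma>^^j) (f i))"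
  by (induction S rule: infinite_finite_induct) (simp_all add: sigp_add)

lemma gr_zero[simp]: "0 \<in> gr i" by (simp add: gr_def)
lemma gr_add: "x \<in> gr i \<Longrightarrow> y \<in> gr i \<Longrightarrow> x + y \<in> gr i"
  by (simp add: gr_def sig_add V.scale_right_distrib)
lemma gr_scale: "x \<in> gr i \<Longrightarrow> scale a x \<in> gr i"
  by (simp add: gr_def sig_scale V.scale_left_commute)
lemma gr_minus: "x \<in> gr i \<Longrightarrow> - x \<in> gr i"
  by (simp add: gr_def sig_minus)
lemma gr_diff: "x \<in> gr i \<Longrightarrow> y \<in> gr i \<Longrightarrow> x - y \<in> gr i"
  using gr_add[of x i "- y"] gr_minus[of y i] by simp
lemma gr_sum: "(\<And>j. j \<in> S \<Longrightarrow> f j \<in> gr i) \<Longrightarrow> sum f S \<in> gr i"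
  by (induction S rule: infinite_finite_induct) (simp_all add: gr_add)
lemma gr_br: "x \<in> gr i \<Longrightarrow> y \<in> gr j \<Longrightarrow> br x y \<in> gr (i + j)"
  by (simp add: gr_def sig_br br_scale br_scale2 E_add V.scale_scale mult.commute)

lemma gr_sigp: "y \<in> gr t \<Longrightarrow> (\<sigma>^^j) y = scale (E t ^ j) y"
  by (induction j) (simp_all add: gr_def sig_scale V.scale_scale mult.commute)

definition proj :: "int \<Rightarrow> 'g \<Rightarrow> 'g" where
  "proj r x = scale (1 / of_nat n) (\<Sum>j<n. scale (E (- r * int j)) ((\<sigma>^^j) x))"

lemma proj_add: "proj r (x + y) = proj r x + proj r y"
  by (simp add: proj_def sigp_add V.scale_right_distrib sum.distrib)
lemma proj_scale: "proj r (scale a x) = scale a (proj r x)"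
  by (simp add: proj_def sigp_scale V.scale_sum_right V.scale_scale mult.commute)
lemma proj_zero[simp]: "proj r 0 = 0"
  by (simp add: proj_def)
lemma proj_sum: "proj r (sum f S) = (\<Sum>i\<in>S. proj r (f i))"
  by (induction S rule: infinite_finite_induct) (simp_all add: proj_add)

lemma proj_gr: "proj r x \<in> gr r"
proof -
  define f where "f j = scale (E (- r * int j)) ((\<sigma>^^j) x)" for j
  have fn: "f n = f 0"
  proof -
    have "E (- r * int n) = 1" by (subst E_one_iff) simp
    thus ?thesis by (simp add: f_def sig_n)
  qed
  have shift: "(\<Sum>j<n. f (Suc j)) = (\<Sum>j<n. f j)"
  proof -
    have "(\<Sum>j<Suc n. f j) = f 0 + (\<Sum>j<n. f (Suc j))" by (rule sum.lessThan_Suc_shift)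
    moreover have "(\<Sum>j<Suc n. f j) = (\<Sum>j<n. f j) + f n" by simp
    ultimately show ?thesis using fn by (simp add: add.commute)
  qed
  have step: "\<sigma> (f j) = scale (E r) (f (Suc j))" for j
  proof -
    have e: "E r * E (- r * int (Suc j)) = E (- r * int j)"
      by (simp add: E_add[symmetric] algebra_simps)
    have "\<sigma> (f j) = scale (E (- r * int j)) ((\<sigma>^^(Suc j)) x)" by (simp add: f_def sig_scale)
    also have "\<dots> = scale (E r) (f (Suc j))" by (simp only: f_def V.scale_scale e)
    finally show ?thesis .
  qed
  have "\<sigma> (proj r x) = scale (1 / of_nat n) (\<Sum>j<n. \<sigma> (f j))"
    by (simp add: proj_def sig_scale sig_sum f_def)
  also have "\<dots> = scale (1 / of_nat n) (scale (E r) (\<Sum>j<n. f (Suc j)))"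
    by (simp add: step V.scale_sum_right)
  also have "\<dots> = scale (1 / of_nat n) (scale (E r) (\<Sum>j<n. f j))"
    by (simp only: shift)
  also have "\<dots> = scale (E r) (proj r x)"
    by (simp add: proj_def f_def V.scale_left_commute)
  finally show ?thesis by (simp add: gr_def)
qed

lemma geom: "(\<Sum>j<n. (w::'k) ^ j) = (if w = 1 then of_nat n else 0)" if "w ^ n = 1"
proof (cases "w = 1")
  case True thus ?thesis by simp
next
  case False
  have "(\<Sum>j<n. w ^ j) = (1 - w ^ n) / (1 - w)" using False by (simp only: sum_gp_strict if_False)
  thus ?thesis using that False by simp
qed

lemma proj_on_gr: assumes "y \<in> gr t" shows "proj r y = (if (t - r) mod int n = 0 then y else 0)"
proof -
  have "proj r y = scale (1 / of_nat n) (\<Sum>j<n. scale (E (t - r) ^ j) y)"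
  proof -
    have "scale (E (- r * int j)) ((\<sigma>^^j) y) = scale (E (t - r) ^ j) y" for j
    proof -
      have "E (- r * int j) * E t ^ j = E (- r * int j) * E (t * int j)" by (simp only: E_mult)
      also have "\<dots> = E (- r * int j + t * int j)" by (simp only: E_add)
      also have "- r * int j + t * int j = (t - r) * int j" by (simp add: algebra_simps)
      finally have "E (- r * int j) * E t ^ j = E (t - r) ^ j" by (simp only: E_mult)
      thus ?thesis unfolding gr_sigp[OF assms] V.scale_scale by (simp only:)
    qed
    thus ?thesis unfolding proj_def by (simp only:)
  qed
  also have "\<dots> = scale (1 / of_nat n * (\<Sum>j<n. E (t - r) ^ j)) y"
    by (simp only: V.scale_sum_left[symmetric] V.scale_scale)
  also have "\<dots> = (if (t - r) mod int n = 0 then y else 0)"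
  proof -
    have g: "(\<Sum>j<n. E (t - r) ^ j) = (if E (t - r) = 1 then of_nat n else 0)"
      by (rule geom, rule E_pow_n)
    show ?thesis using n_pos unfolding g E_one_iff by simp
  qed
  finally show ?thesis .
qed

lemma proj_self: "y \<in> gr t \<Longrightarrow> proj t y = y"
  by (simp add: proj_on_gr)

lemma proj_decomp: "x = (\<Sum>r<n. proj (int r) x)"
proof -
  have ee: "E (- int r * int j) = E (- int j) ^ r" for r j
  proof -
    have "E (- int r * int j) = E ((- int j) * int r)" by (simp add: mult.commute)
    also have "\<dots> = E (- int j) ^ r" by (rule E_mult)
    finally show ?thesis .
  qed
  have "(\<Sum>r<n. proj (int r) x) = scale (1 / of_nat n) (\<Sum>r<n. \<Sum>j<n. scale (E (- int j) ^ r) ((\<sigma>^^j) x))"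
    by (simp only: proj_def ee V.scale_sum_right[symmetric])
  also have "\<dots> = scale (1 / of_nat n) (\<Sum>j<n. \<Sum>r<n. scale (E (- int j) ^ r) ((\<sigma>^^j) x))"
    by (rule arg_cong[where f = "scale _"], rule sum.swap)
  also have "\<dots> = scale (1 / of_nat n) (\<Sum>j<n. scale (\<Sum>r<n. E (- int j) ^ r) ((\<sigma>^^j) x))"
    by (simp only: V.scale_sum_left)
  also have "\<dots> = scale (1 / of_nat n) (\<Sum>j<n. if j = 0 then scale (of_nat n) x else 0)"
  proof -
    have "(\<Sum>r<n. E (- int j) ^ r) = (if j = 0 then of_nat n else 0)" if "j < n" for j
    proof -
      have a: "(- int j) mod int n = 0 \<longleftrightarrow> int j mod int n = 0"
        by (simp only: mod_eq_0_iff_dvd dvd_minus_iff)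
      have b: "int j mod int n = int j" using that by simp
      have "E (- int j) = 1 \<longleftrightarrow> j = 0"
        by (simp only: E_one_iff a b) simp
      moreover have "(\<Sum>r<n. E (- int j) ^ r) = (if E (- int j) = 1 then of_nat n else 0)"
        by (rule geom, rule E_pow_n)
      ultimately show ?thesis by simp
    qed
    hence "(\<Sum>j<n. scale (\<Sum>r<n. E (- int j) ^ r) ((\<sigma>^^j) x)) = (\<Sum>j<n. if j = 0 then scale (of_nat n) x else 0)"
      by (intro sum.cong refl) simp
    thus ?thesis by (rule arg_cong)
  qed
  also have "\<dots> = scale (1 / of_nat n) (scale (of_nat n) x)"
    using n_pos by (simp add: sum.delta)
  also have "\<dots> = x" using n_pos by (simp add: V.scale_scale)
  finally show ?thesis by (rule sym)
qed

end



context ctx begin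

lemma perfect: "V.span {br x y | x y. True} = UNIV"
proof -
  let ?J = "V.span {br x y | x y. True}"
  have cl: "br x y \<in> ?J" if "y \<in> ?J" for x y
    using that
  proof (induction y rule: V.span_induct_alt)
    case base thus ?case by (simp add: V.span_zero)
  next
    case (step c g y)
    then obtain a b where g: "g = br a b" by auto
    have "br x (scale c g + y) = scale c (br x g) + br x y" by (simp add: br_add2 br_scale2)
    moreover have "br x g \<in> ?J" by (rule V.span_base) auto
    ultimately show ?case using step by (simp add: V.span_add V.span_scale)
  qed
  have "lie_ideal scale br ?J" unfolding lie_ideal_def using cl by simp
  hence "?J = {0} \<or> ?J = UNIV" by (rule simple)
  moreover obtain a b where "br a b \<noteq> 0" using nonab by auto
  moreover have "br a b \<in> ?J" by (rule V.span_base) auto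
  ultimately show ?thesis by auto
qed

lemma Q_sum:
  assumes Q0: "Q 0" and Qadd: "\<And>a b. Q a \<Longrightarrow> Q b \<Longrightarrow> Q (a + b)"
    and h: "\<And>i. i \<in> S \<Longrightarrow> Q (f i)"
  shows "Q (sum f S)"
  using h by (induction S rule: infinite_finite_induct) (simp_all add: Q0 Qadd)

lemma span_pair:
  assumes Q0: "Q 0" and Qadd: "\<And>a b. a \<in> gr s \<Longrightarrow> b \<in> gr s \<Longrightarrow> Q a \<Longrightarrow> Q b \<Longrightarrow> Q (a + b)"
    and Qsc: "\<And>c a. a \<in> gr s \<Longrightarrow> Q a \<Longrightarrow> Q (scale c a)"
    and Qbr: "\<And>p x y. x \<in> gr p \<Longrightarrow> y \<in> gr (s - p) \<Longrightarrow> Q (br x y)"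
    and v: "v \<in> gr s"
  shows "Q v"
proof -
  define R where "R v \<longleftrightarrow> v \<in> gr s \<and> Q v" for v
  have R0: "R 0" by (simp add: R_def Q0)
  have Radd: "R a \<Longrightarrow> R b \<Longrightarrow> R (a + b)" for a b by (simp add: R_def Qadd gr_add)
  have Rsc: "R a \<Longrightarrow> R (scale c a)" for a c by (simp add: R_def Qsc gr_scale)
  have gen: "R (proj s (br a b))" for a b
  proof -
    have "br a b = br (\<Sum>p<n. proj (int p) a) (\<Sum>q<n. proj (int q) b)"
      using proj_decomp[of a] proj_decomp[of b] by simp
    also have "\<dots> = (\<Sum>q<n. \<Sum>p<n. br (proj (int p) a) (proj (int q) b))"
      by (simp add: br_sum)
    finally have "proj s (br a b) = (\<Sum>q<n. \<Sum>p<n. proj s (br (proj (int p) a) (proj (int q) b)))"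
      by (simp add: proj_sum)
    moreover have "R (proj s (br (proj (int p) a) (proj (int q) b)))" for p q
    proof -
      have m: "br (proj (int p) a) (proj (int q) b) \<in> gr (int p + int q)"
        by (rule gr_br) (rule proj_gr)+
      show ?thesis
      proof (cases "(int p + int q - s) mod int n = 0")
        case True
        have e: "int q - (s - int p) = int p + int q - s" by simp
        have "int q mod int n = (s - int p) mod int n"
          unfolding mod_eq_dvd_iff e using True by (simp add: mod_eq_0_iff_dvd)
        hence "gr (int q) = gr (s - int p)" by (rule gr_mod)
        hence "proj (int q) b \<in> gr (s - int p)" using proj_gr by auto
        hence "Q (br (proj (int p) a) (proj (int q) b))" by (rule Qbr[OF proj_gr])
        thus ?thesis using proj_on_gr[OF m, of s] True proj_gr[of s "br (proj (int p) a) (proj (int q) b)"] by (simp add: R_def)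
      next
        case False thus ?thesis using proj_on_gr[OF m, of s] R0 by simp
      qed
    qed
    ultimately show ?thesis by (simp add: Q_sum[where Q=R, OF R0 Radd])
  qed
  have "R (proj s w)" for w
  proof -
    have "w \<in> V.span {br x y | x y. True}" unfolding perfect by (rule UNIV_I)
    thus ?thesis
    proof (induction w rule: V.span_induct_alt)
      case base thus ?case by (simp add: R0)
    next
      case (step c g y)
      then obtain a b where g: "g = br a b" by auto
      have "proj s (scale c g + y) = scale c (proj s g) + proj s y" by (simp add: proj_add proj_scale)
      thus ?case using step gen g Radd Rsc by simp
    qed
  qed
  from this[of v] show ?thesis using proj_self[OF v] by (simp add: R_def)
qed

lemma span_triple:
  assumes Q0: "Q 0" and Qadd: "\<And>a b. a \<in> gr s \<Longrightarrow> b \<in> gr s \<Longrightarrow> Q a \<Longrightarrow> Q b \<Longrightarrow> Q (a + b)"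
    and Qsc: "\<And>c a. a \<in> gr s \<Longrightarrow> Q a \<Longrightarrow> Q (scale c a)"
    and Qbr: "\<And>p q x y z. x \<in> gr p \<Longrightarrow> y \<in> gr q \<Longrightarrow> z \<in> gr (s - p - q) \<Longrightarrow> Q (br (br x y) z)"
    and v: "v \<in> gr s"
  shows "Q v"
proof (rule span_pair[where Q=Q, OF Q0 Qadd Qsc _ v])
  fix r w z assume w: "w \<in> gr r" and z: "z \<in> gr (s - r)"
  show "Q (br w z)"
  proof (rule span_pair[where Q="\<lambda>w. Q (br w z)" and s=r, OF _ _ _ _ w])
    show "Q (br 0 z)" by (simp add: Q0)
    fix a b assume a: "a \<in> gr r" and b: "b \<in> gr r" and "Q (br a z)" "Q (br b z)"
    thus "Q (br (a + b) z)" using Qadd[of "br a z" "br b z"] gr_br[OF a z] gr_br[OF b z] by (simp add: br_add)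
  next
    fix c a assume a: "a \<in> gr r" and "Q (br a z)"
    thus "Q (br (scale c a) z)" using Qsc[of "br a z" c] gr_br[OF a z] by (simp add: br_scale)
  next
    fix p x y assume "x \<in> gr p" "y \<in> gr (r - p)"
    moreover have "z \<in> gr (s - p - (r - p))" using z by simp
    ultimately show "Q (br (br x y) z)" by (rule Qbr)
  qed
qed

end



locale ctx2 = ctx scale br \<sigma> n \<epsilon> B
  for scale :: "'k::field_char_0 \<Rightarrow> 'g::ab_group_add \<Rightarrow> 'g" and br \<sigma> n \<epsilon> B +
  fixes \<phi> :: "('g, 'k) aff \<Rightarrow> ('g, 'k) aff \<Rightarrow> 'k"
  assumes cocy: "comm_2_cocycle (aff_carrier scale \<sigma> n \<epsilon>) aff_add (aff_scale scale) (aff_bracket scale br B) \<phi>"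
begin

abbreviation "L \<equiv> aff_carrier scale \<sigma> n \<epsilon>"
abbreviation "brk \<equiv> aff_bracket scale br B"
abbreviation "sc \<equiv> aff_scale scale"

definition hom :: "int \<Rightarrow> 'g \<Rightarrow> ('g, 'k) aff" where
  "hom k x = ((\<lambda>i. if i = k then x else 0), 0, 0)"
definition KK :: "('g, 'k) aff" where "KK = ((\<lambda>_. 0), 1, 0)"
definition DD :: "('g, 'k) aff" where "DD = ((\<lambda>_. 0), 0, 1)"
definition Z0 :: "('g, 'k) aff" where "Z0 = ((\<lambda>_. 0), 0, 0)"

lemma L_iff: "(a, c, d) \<in> L \<longleftrightarrow> finite {i. a i \<noteq> 0} \<and> (\<forall>i. a i \<in> gr i)"
  by (simp add: aff_carrier_def gr_eq)

lemma add_in: assumes "x \<in> L" "y \<in> L" shows "aff_add x y \<in> L"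
proof -
  obtain a c d where x: "x = (a, c, d)" by (cases x) auto
  obtain b c' d' where y: "y = (b, c', d')" by (cases y) auto
  have "{i. a i + b i \<noteq> 0} \<subseteq> {i. a i \<noteq> 0} \<union> {i. b i \<noteq> 0}" by auto
  thus ?thesis using assms by (auto simp: x y aff_add_def L_iff gr_add intro: finite_subset)
qed

lemma sc_in: assumes "x \<in> L" shows "sc r x \<in> L"
proof -
  obtain a c d where x: "x = (a, c, d)" by (cases x) auto
  have "{i. scale r (a i) \<noteq> 0} \<subseteq> {i. a i \<noteq> 0}" by auto
  thus ?thesis using assms by (auto simp: x aff_scale_def L_iff gr_scale intro: finite_subset)
qed

lemma hom_in: "x \<in> gr k \<Longrightarrow> hom k x \<in> L"
proof -
  assume "x \<in> gr k"
  moreover have "{i. (if i = k then x else 0) \<noteq> 0} \<subseteq> {k}" by auto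
  ultimately show ?thesis unfolding hom_def L_iff by (auto intro: finite_subset)
qed

lemma KK_in: "KK \<in> L" by (simp add: KK_def L_iff)
lemma DD_in: "DD \<in> L" by (simp add: DD_def L_iff)
lemma Z0_in: "Z0 \<in> L" by (simp add: Z0_def L_iff)

lemma phi_add: "x \<in> L \<Longrightarrow> y \<in> L \<Longrightarrow> z \<in> L \<Longrightarrow> \<phi> (aff_add x y) z = \<phi> x z + \<phi> y z"
  using cocy by (simp add: comm_2_cocycle_def)
lemma phi_sc: "x \<in> L \<Longrightarrow> y \<in> L \<Longrightarrow> \<phi> (sc r x) y = r * \<phi> x y"
  using cocy by (simp add: comm_2_cocycle_def)
lemma phi_sym: "x \<in> L \<Longrightarrow> y \<in> L \<Longrightarrow> \<phi> x y = \<phi> y x"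
  using cocy by (simp add: comm_2_cocycle_def)
lemma phi_cyc: "x \<in> L \<Longrightarrow> y \<in> L \<Longrightarrow> z \<in> L \<Longrightarrow> \<phi> (brk x y) z + \<phi> (brk z x) y + \<phi> (brk y z) x = 0"
  using cocy unfolding comm_2_cocycle_def by blast

lemma phi_add2: "x \<in> L \<Longrightarrow> y \<in> L \<Longrightarrow> z \<in> L \<Longrightarrow> \<phi> z (aff_add x y) = \<phi> z x + \<phi> z y"
  using phi_add[of x y z] phi_sym[of z] add_in[of x y] by simp
lemma phi_sc2: "x \<in> L \<Longrightarrow> y \<in> L \<Longrightarrow> \<phi> y (sc r x) = r * \<phi> y x"
  using phi_sc[of x y r] phi_sym[of y] sc_in[of x r] by simp

lemma Z0_eq: "aff_add Z0 Z0 = Z0" by (simp add: Z0_def aff_add_def)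
lemma phi_Z0: "z \<in> L \<Longrightarrow> \<phi> Z0 z = 0"
  using phi_add[OF Z0_in Z0_in, of z] by (simp add: Z0_eq)
lemma phi_Z0': "z \<in> L \<Longrightarrow> \<phi> z Z0 = 0"
  using phi_Z0 phi_sym Z0_in by metis

lemma hom_zero: "hom k 0 = Z0" by (simp add: hom_def Z0_def)
lemma hom_add: "hom k (x + y) = aff_add (hom k x) (hom k y)"
  by (simp add: hom_def aff_add_def fun_eq_iff)
lemma hom_scale: "hom k (scale r x) = sc r (hom k x)"
  by (simp add: hom_def aff_scale_def fun_eq_iff)
lemma sc_KK: "sc r KK = ((\<lambda>_. 0), r, 0)" by (simp add: KK_def aff_scale_def)

lemma supp_hom: "{i. (if i = k then x else 0) \<noteq> 0} = (if x = 0 then {} else {k})"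
  by auto

lemma brk_hh: "brk (hom a x) (hom b y) =
   aff_add (hom (a + b) (br x y)) (sc (if a + b = 0 then of_int a * B x y else 0) KK)"
proof (cases "x = 0")
  case True thus ?thesis
    by (simp add: aff_bracket_def hom_def aff_add_def aff_scale_def KK_def fun_eq_iff)
next
  case False
  show ?thesis
    by (simp add: aff_bracket_def hom_def aff_add_def aff_scale_def KK_def fun_eq_iff supp_hom False)
qed

lemma brk_D_hom: "brk DD (hom a x) = sc (of_int a) (hom a x)"
  by (simp add: aff_bracket_def hom_def aff_scale_def DD_def fun_eq_iff)

lemma brk_hom_D: "brk (hom a x) DD = sc (- of_int a) (hom a x)"
proof (cases "x = 0")
  case True thus ?thesis by (simp add: aff_bracket_def hom_def aff_scale_def DD_def fun_eq_iff)
next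
  case False thus ?thesis
    by (simp add: aff_bracket_def hom_def aff_scale_def DD_def fun_eq_iff supp_hom)
qed

lemma brk_K1: "brk KK z = Z0"
  by (cases z) (simp add: aff_bracket_def KK_def Z0_def fun_eq_iff)
lemma brk_K2: "brk z KK = Z0"
  by (cases z) (simp add: aff_bracket_def KK_def Z0_def fun_eq_iff)

lemma brk_cen: "brk (a, c, d) y = brk (a, 0, d) y"
  by (cases y) (simp add: aff_bracket_def)

end



context ctx2 begin

lemma brk_in: assumes X: "X \<in> L" and Y: "Y \<in> L" shows "brk X Y \<in> L"
proof -
  obtain a c d where x: "X = (a, c, d)" by (cases X) auto
  obtain b c' d' where y: "Y = (b, c', d')" by (cases Y) auto
  let ?Sa = "{i. a i \<noteq> 0}" and ?Sb = "{i. b i \<noteq> 0}"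
  have fa: "finite ?Sa" and ga: "\<And>i. a i \<in> gr i" using X by (auto simp: x L_iff)
  have fb: "finite ?Sb" and gb: "\<And>i. b i \<in> gr i" using Y by (auto simp: y L_iff)
  define g where "g k = (\<Sum>i\<in>?Sa. br (a i) (b (k - i))) + scale (d * of_int k) (b k) - scale (d' * of_int k) (a k)" for k
  have e: "brk X Y = (g, (\<Sum>i\<in>?Sa. of_int i * B (a i) (b (- i))), 0)"
    by (simp add: x y aff_bracket_def g_def fun_eq_iff)
  have gk: "g k \<in> gr k" for k
  proof -
    have "br (a i) (b (k - i)) \<in> gr k" for i using gr_br[OF ga gb, of i "k - i"] by simp
    hence "(\<Sum>i\<in>?Sa. br (a i) (b (k - i))) \<in> gr k" by (rule gr_sum)
    thus ?thesis unfolding g_def by (intro gr_diff gr_add gr_scale ga gb)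
  qed
  have "{k. g k \<noteq> 0} \<subseteq> (\<lambda>(i, j). i + j) ` (?Sa \<times> ?Sb) \<union> ?Sa \<union> ?Sb"
  proof
    fix k assume k: "k \<in> {k. g k \<noteq> 0}"
    show "k \<in> (\<lambda>(i, j). i + j) ` (?Sa \<times> ?Sb) \<union> ?Sa \<union> ?Sb"
    proof (rule ccontr)
      assume nk: "\<not> ?thesis"
      hence ak: "a k = 0" and bk: "b k = 0" by auto
      have "b (k - i) = 0" if "i \<in> ?Sa" for i
      proof (rule ccontr)
        assume "b (k - i) \<noteq> 0"
        hence "k \<in> (\<lambda>(i, j). i + j) ` (?Sa \<times> ?Sb)" using that by (auto intro!: image_eqI[where x="(i, k - i)"])
        thus False using nk by auto
      qed
      hence "g k = 0" by (simp add: g_def ak bk)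
      thus False using k by simp
    qed
  qed
  moreover have "finite ((\<lambda>(i, j). i + j) ` (?Sa \<times> ?Sb) \<union> ?Sa \<union> ?Sb)" using fa fb by simp
  ultimately have "finite {k. g k \<noteq> 0}" by (rule finite_subset)
  thus ?thesis unfolding e L_iff using gk by simp
qed

lemma phi_expand_gen:
  assumes "finite S" and Z: "Z \<in> L"
  shows "{i. f i \<noteq> 0} \<subseteq> S \<Longrightarrow> (\<forall>i. f i \<in> gr i) \<Longrightarrow>
    \<phi> (f, c, d) Z = (\<Sum>i\<in>S. \<phi> (hom i (f i)) Z) + c * \<phi> KK Z + d * \<phi> DD Z"
  using assms(1)
proof (induction S arbitrary: f rule: finite_induct)
  case empty
  hence f: "f = (\<lambda>_. 0)" by auto
  have "(f, c, d) = aff_add (sc c KK) (sc d DD)"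
    by (simp add: f aff_add_def aff_scale_def KK_def DD_def fun_eq_iff)
  thus ?case using phi_add[OF sc_in[OF KK_in] sc_in[OF DD_in] Z] phi_sc[OF KK_in Z] phi_sc[OF DD_in Z] by simp
next
  case (insert s S)
  define f' where "f' = f(s := 0)"
  have s1: "{i. f' i \<noteq> 0} \<subseteq> S" using insert.prems(1) by (auto simp: f'_def)
  have s2: "\<forall>i. f' i \<in> gr i" using insert.prems(2) by (simp add: f'_def)
  have fin: "finite {i. f' i \<noteq> 0}" using s1 insert.hyps(1) by (rule finite_subset)
  have inL: "(f', c, d) \<in> L" using fin s2 by (simp add: L_iff)
  have eq: "(f, c, d) = aff_add (hom s (f s)) (f', c, d)"
    by (simp add: aff_add_def hom_def f'_def fun_eq_iff)
  have "\<phi> (f, c, d) Z = \<phi> (hom s (f s)) Z + \<phi> (f', c, d) Z"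
    unfolding eq by (rule phi_add[OF hom_in inL Z]) (use insert.prems(2) in auto)
  also have "\<phi> (f', c, d) Z = (\<Sum>i\<in>S. \<phi> (hom i (f' i)) Z) + c * \<phi> KK Z + d * \<phi> DD Z"
    by (rule insert.IH[OF s1 s2])
  also have "(\<Sum>i\<in>S. \<phi> (hom i (f' i)) Z) = (\<Sum>i\<in>S. \<phi> (hom i (f i)) Z)"
    using insert.hyps(2) by (intro sum.cong) (auto simp: f'_def)
  finally show ?case using insert.hyps by (simp add: algebra_simps)
qed

lemma phi_expand:
  assumes "(f, c, d) \<in> L" and Z: "Z \<in> L"
  shows "\<phi> (f, c, d) Z = (\<Sum>i\<in>{i. f i \<noteq> 0}. \<phi> (hom i (f i)) Z) + c * \<phi> KK Z + d * \<phi> DD Z"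
  using assms by (intro phi_expand_gen) (auto simp: L_iff)

lemma L0: "u \<in> L \<Longrightarrow> w \<in> L \<Longrightarrow> \<phi> KK (brk u w) = 0"
proof -
  assume u: "u \<in> L" and w: "w \<in> L"
  have "\<phi> (brk u w) KK + \<phi> (brk KK u) w + \<phi> (brk w KK) u = 0" by (rule phi_cyc[OF u w KK_in])
  hence "\<phi> (brk u w) KK = 0" by (simp add: brk_K1 brk_K2 phi_Z0 u w)
  thus ?thesis using phi_sym[OF KK_in brk_in[OF u w]] by simp
qed

lemma R1: assumes x: "x \<in> gr a" and y: "y \<in> gr b"
  shows "\<phi> (brk (hom a x) (hom b y)) DD = (of_int b - of_int a) * \<phi> (hom a x) (hom b y)"
proof -
  note u = hom_in[OF x] and w = hom_in[OF y]
  have "\<phi> (brk (hom a x) (hom b y)) DD + \<phi> (brk DD (hom a x)) (hom b y) + \<phi> (brk (hom b y) DD) (hom a x) = 0"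
    by (rule phi_cyc[OF u w DD_in])
  hence "\<phi> (brk (hom a x) (hom b y)) DD + of_int a * \<phi> (hom a x) (hom b y) - of_int b * \<phi> (hom b y) (hom a x) = 0"
    by (simp add: brk_D_hom brk_hom_D phi_sc u w)
  thus ?thesis using phi_sym[OF u w] by (simp add: algebra_simps)
qed

definition cen :: "int \<Rightarrow> int \<Rightarrow> 'g \<Rightarrow> 'g \<Rightarrow> 'k" where
  "cen a b x y = (if a + b = 0 then of_int a * B x y else 0)"

lemma phi_hh1: assumes x: "x \<in> gr a" and y: "y \<in> gr b" and Z: "Z \<in> L"
  shows "\<phi> (brk (hom a x) (hom b y)) Z = \<phi> (hom (a + b) (br x y)) Z + cen a b x y * \<phi> KK Z"
proof -
  have h: "hom (a + b) (br x y) \<in> L" by (rule hom_in, rule gr_br[OF x y])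
  show ?thesis unfolding brk_hh cen_def[symmetric]
    by (simp add: phi_add[OF h sc_in[OF KK_in] Z] phi_sc[OF KK_in Z])
qed

lemma phi_hh2: assumes x: "x \<in> gr a" and y: "y \<in> gr b" and Z: "Z \<in> L"
  shows "\<phi> Z (brk (hom a x) (hom b y)) = \<phi> Z (hom (a + b) (br x y)) + cen a b x y * \<phi> Z KK"
proof -
  have h: "hom (a + b) (br x y) \<in> L" by (rule hom_in, rule gr_br[OF x y])
  have "\<phi> Z (brk (hom a x) (hom b y)) = \<phi> (brk (hom a x) (hom b y)) Z"
    by (rule phi_sym[OF Z brk_in[OF hom_in[OF x] hom_in[OF y]]])
  also have "\<dots> = \<phi> (hom (a + b) (br x y)) Z + cen a b x y * \<phi> KK Z" by (rule phi_hh1[OF x y Z])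
  finally show ?thesis using phi_sym[OF Z h] phi_sym[OF Z KK_in] by simp
qed

lemma gr_n: "x \<in> gr p \<Longrightarrow> x \<in> gr (p + int n)"
  using gr_shift[of p 1] by simp

lemma P2: assumes v: "v \<in> gr k" shows "\<phi> KK (hom k v) = 0"
proof (cases "k = 0")
  case False
  have "brk DD (hom k (scale (1 / of_int k) v)) = hom k v"
    using False by (simp add: brk_D_hom hom_scale[symmetric] V.scale_scale)
  thus ?thesis using L0[OF DD_in hom_in[OF gr_scale[OF v, of "1 / of_int k"]]] by simp
next
  case True
  have "\<phi> KK (hom 0 v) = 0"
  proof (rule span_pair[where s=0 and Q="\<lambda>v. \<phi> KK (hom 0 v) = 0", OF _ _ _ _ v[unfolded True]])
    show "\<phi> KK (hom 0 0) = 0" by (simp add: hom_zero phi_Z0' KK_in)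
  next
    fix a b assume a: "a \<in> gr 0" and b: "b \<in> gr 0" and "\<phi> KK (hom 0 a) = 0" "\<phi> KK (hom 0 b) = 0"
    thus "\<phi> KK (hom 0 (a + b)) = 0" by (simp add: hom_add phi_add2[OF hom_in[OF a] hom_in[OF b] KK_in])
  next
    fix c a assume a: "a \<in> gr 0" and "\<phi> KK (hom 0 a) = 0"
    thus "\<phi> KK (hom 0 (scale c a)) = 0" by (simp add: hom_scale phi_sc2[OF hom_in[OF a] KK_in])
  next
    fix p x y assume x: "x \<in> gr p" and y: "y \<in> gr (0 - p)"
    have x': "x \<in> gr (p + int n)" by (rule gr_n[OF x])
    have y': "y \<in> gr (- p)" using y by simp
    have y'': "y \<in> gr (- (p + int n))" using gr_shift[of "- p" "-1"] y' by simp
    have e1: "\<phi> KK (hom 0 (br x y)) + of_int p * B x y * \<phi> KK KK = 0"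
      using L0[OF hom_in[OF x] hom_in[OF y']] phi_hh2[OF x y' KK_in] by (simp add: cen_def)
    have e2: "\<phi> KK (hom 0 (br x y)) + of_int (p + int n) * B x y * \<phi> KK KK = 0"
      using L0[OF hom_in[OF x'] hom_in[OF y'']] phi_hh2[OF x' y'' KK_in] by (simp add: cen_def)
    have "of_nat n * (B x y * \<phi> KK KK) = (\<phi> KK (hom 0 (br x y)) + of_int (p + int n) * B x y * \<phi> KK KK)
        - (\<phi> KK (hom 0 (br x y)) + of_int p * B x y * \<phi> KK KK)" by (simp add: algebra_simps)
    also have "\<dots> = 0" using e1 e2 by simp
    finally have "of_nat n * (B x y * \<phi> KK KK) = 0" .
    hence "B x y * \<phi> KK KK = 0" using n_pos by simp
    with e1 show "\<phi> KK (hom 0 (br x y)) = 0" by (simp add: algebra_simps)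
  qed
  thus ?thesis using True by simp
qed

end



lemma tri_alg:
  fixes A Bv C Z Y X G1 G2 G3 :: "'a::comm_ring"
  assumes "A + Bv + C = 0" "Z * A = G1" "Y * Bv = G2" "X * C = G3"
  shows "Y * X * G1 + Z * X * G2 + Z * Y * G3 = 0"
proof -
  have "Y * X * (Z * A) + Z * X * (Y * Bv) + Z * Y * (X * C) = Z * Y * X * (A + Bv + C)"
    by (simp add: algebra_simps)
  thus ?thesis using assms by simp
qed

lemma quad_int:
  fixes G1 F2 F3 e :: "'a::field_char_0" and p q l N :: int
  assumes N: "N \<noteq> 0"
    and E: "\<And>k. of_int ((q - N*k) - l - (p + N*k)) * of_int ((p + N*k) - (q - N*k) - l) * G1
       + of_int (l - (p + N*k) - (q - N*k)) * of_int ((p + N*k) - (q - N*k) - l) * (F2 + e * of_int (l + (p + N*k)))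
       + of_int (l - (p + N*k) - (q - N*k)) * of_int ((q - N*k) - l - (p + N*k)) * (F3 + e * of_int ((q - N*k) + l)) = 0"
  shows "G1 = of_int (l - p - q) * e"
proof -
  let ?E = "\<lambda>k::int. of_int ((q - N*k) - l - (p + N*k)) * of_int ((p + N*k) - (q - N*k) - l) * G1
       + of_int (l - (p + N*k) - (q - N*k)) * of_int ((p + N*k) - (q - N*k) - l) * (F2 + e * of_int (l + (p + N*k)))
       + of_int (l - (p + N*k) - (q - N*k)) * of_int ((q - N*k) - l - (p + N*k)) * (F3 + e * of_int ((q - N*k) + l)) :: 'a"
  have "?E 1 + ?E (-1) - 2 * ?E 0 = - 8 * (of_int N)^2 * (G1 - of_int (l - p - q) * e)"
    by (simp add: algebra_simps power2_eq_square)
  moreover have "?E 1 + ?E (-1) - 2 * ?E 0 = 0" by (simp only: E) simp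
  ultimately have "- 8 * (of_int N)^2 * (G1 - of_int (l - p - q) * e) = (0::'a)" by simp
  thus ?thesis using N by simp
qed

context ctx2 begin

definition kap :: 'k where "kap = \<phi> KK DD"

lemma G: assumes x: "x \<in> gr a" and y: "y \<in> gr b" and z: "z \<in> gr c" and s: "s = a + b + c"
  shows "of_int (c - a - b) * \<phi> (brk (hom a x) (hom b y)) (hom c z)
     = \<phi> (hom s (br (br x y) z)) DD + cen (a + b) c (br x y) z * kap"
proof -
  have xy: "br x y \<in> gr (a + b)" by (rule gr_br[OF x y])
  have "\<phi> (brk (hom a x) (hom b y)) (hom c z) = \<phi> (hom (a + b) (br x y)) (hom c z) + cen a b x y * \<phi> KK (hom c z)"
    by (rule phi_hh1[OF x y hom_in[OF z]])
  also have "\<phi> KK (hom c z) = 0" by (rule P2[OF z])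
  finally have A: "\<phi> (brk (hom a x) (hom b y)) (hom c z) = \<phi> (hom (a + b) (br x y)) (hom c z)" by simp
  have "\<phi> (brk (hom (a + b) (br x y)) (hom c z)) DD = (of_int c - of_int (a + b)) * \<phi> (hom (a + b) (br x y)) (hom c z)"
    by (rule R1[OF xy z])
  moreover have "\<phi> (brk (hom (a + b) (br x y)) (hom c z)) DD = \<phi> (hom (a + b + c) (br (br x y) z)) DD + cen (a + b) c (br x y) z * \<phi> KK DD"
    by (rule phi_hh1[OF xy z DD_in])
  ultimately show ?thesis using A s by (simp add: kap_def algebra_simps)
qed

lemma Ek: assumes x: "x \<in> gr p" and y: "y \<in> gr q" and z: "z \<in> gr l" and s: "s = p + q + l"
  and e: "e = (if s = 0 then B (br x y) z * kap else 0)"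
  shows "of_int ((q - int n*k) - l - (p + int n*k)) * of_int ((p + int n*k) - (q - int n*k) - l) * (\<phi> (hom s (br (br x y) z)) DD + cen (p + q) l (br x y) z * kap)
       + of_int (l - (p + int n*k) - (q - int n*k)) * of_int ((p + int n*k) - (q - int n*k) - l) * (\<phi> (hom s (br (br z x) y)) DD + e * of_int (l + (p + int n*k)))
       + of_int (l - (p + int n*k) - (q - int n*k)) * of_int ((q - int n*k) - l - (p + int n*k)) * (\<phi> (hom s (br (br y z) x)) DD + e * of_int ((q - int n*k) + l)) = 0"
proof -
  define P where "P = p + int n * k"
  define Q where "Q = q - int n * k"
  have xP: "x \<in> gr P" using gr_shift[of p k] x by (simp add: P_def)
  have yQ: "y \<in> gr Q" using gr_shift[of q "- k"] y by (simp add: Q_def)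
  have PQ: "P + Q = p + q" by (simp add: P_def Q_def)
  note u = hom_in[OF xP] and w = hom_in[OF yQ] and zz = hom_in[OF z]
  have h0: "\<phi> (brk (hom P x) (hom Q y)) (hom l z) + \<phi> (brk (hom l z) (hom P x)) (hom Q y) + \<phi> (brk (hom Q y) (hom l z)) (hom P x) = 0"
    by (rule phi_cyc[OF u w zz])
  have h1: "of_int (l - P - Q) * \<phi> (brk (hom P x) (hom Q y)) (hom l z) = \<phi> (hom s (br (br x y) z)) DD + cen (p + q) l (br x y) z * kap"
    using G[OF xP yQ z, of s] s PQ by simp
  have h2: "of_int (Q - l - P) * \<phi> (brk (hom l z) (hom P x)) (hom Q y) = \<phi> (hom s (br (br z x) y)) DD + e * of_int (l + P)"
  proof -
    have "of_int (Q - l - P) * \<phi> (brk (hom l z) (hom P x)) (hom Q y) = \<phi> (hom s (br (br z x) y)) DD + cen (l + P) Q (br z x) y * kap"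
      using G[OF z xP yQ, of s] s PQ by (simp add: algebra_simps)
    moreover have "cen (l + P) Q (br z x) y * kap = e * of_int (l + P)"
      using s PQ by (simp add: cen_def e B_cyc1 algebra_simps)
    ultimately show ?thesis by simp
  qed
  have h3: "of_int (P - Q - l) * \<phi> (brk (hom Q y) (hom l z)) (hom P x) = \<phi> (hom s (br (br y z) x)) DD + e * of_int (Q + l)"
  proof -
    have "of_int (P - Q - l) * \<phi> (brk (hom Q y) (hom l z)) (hom P x) = \<phi> (hom s (br (br y z) x)) DD + cen (Q + l) P (br y z) x * kap"
      using G[OF yQ z xP, of s] s PQ by (simp add: algebra_simps)
    moreover have "cen (Q + l) P (br y z) x * kap = e * of_int (Q + l)"
      using s PQ by (simp add: cen_def e B_cyc2 algebra_simps)
    ultimately show ?thesis by simp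
  qed
  have "l - P - Q = l - p - q" using PQ by simp
  from tri_alg[OF h0 h1 h2 h3] show ?thesis unfolding P_def Q_def .
qed

lemma Core: assumes x: "x \<in> gr p" and y: "y \<in> gr q" and z: "z \<in> gr l" and s: "s = p + q + l"
  shows "\<phi> (hom s (br (br x y) z)) DD + cen (p + q) l (br x y) z * kap
     = of_int (l - p - q) * (if s = 0 then B (br x y) z * kap else 0)"
  apply (rule quad_int[where N="int n"])
  using n_pos apply simp
  apply (rule Ek[OF x y z s refl])
  done

end



context ctx2 begin

lemma BK_F: assumes x: "x \<in> gr p" and y: "y \<in> gr q" and z: "z \<in> gr l"
  shows "\<phi> (hom (p + q + l) (br (br x y) z)) DD = 0 \<and> (p + q + l = 0 \<longrightarrow> B (br x y) z * kap = 0)"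
proof (cases "p + q + l = 0")
  case False
  from Core[OF x y z refl] False show ?thesis by (simp add: cen_def)
next
  case True
  define w where "w = B (br x y) z * kap"
  define F where "F = \<phi> (hom (p + q + l) (br (br x y) z)) DD"
  have x': "x \<in> gr (p - int n)" using gr_shift[of p "-1"] x by simp
  have cen1: "cen (p + q) l (br x y) z = of_int (p + q) * B (br x y) z" using True by (simp add: cen_def)
  have c1: "F + of_int (p + q) * w = of_int (l - p - q) * w"
    using Core[OF x y z refl] True unfolding cen1 by (simp add: F_def w_def mult.assoc)
  have z': "z \<in> gr (l + int n)" using gr_shift[of l 1] z by simp
  have idx: "p - int n + q + (l + int n) = p + q + l" by simp
  have cen2: "cen (p - int n + q) (l + int n) (br x y) z = of_int (p - int n + q) * B (br x y) z"
    using True by (simp add: cen_def)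
  have c2: "F + of_int (p - int n + q) * w = of_int (l + int n - (p - int n) - q) * w"
    using Core[OF x' y z' refl] True unfolding idx cen2 by (simp add: F_def w_def mult.assoc)
  have "3 * of_nat n * w = (F + of_int (p + q) * w - of_int (l - p - q) * w) - (F + of_int (p - int n + q) * w - of_int (l + int n - (p - int n) - q) * w)"
    by (simp add: algebra_simps)
  also have "\<dots> = 0" using c1 c2 by simp
  finally have "w = 0" using n_pos by simp
  with c1 have "F = 0" by simp
  thus ?thesis using \<open>w = 0\<close> by (simp add: F_def w_def)
qed

lemma psi_zero: assumes v: "v \<in> gr s" shows "\<phi> (hom s v) DD = 0"
proof (rule span_triple[where Q="\<lambda>v. \<phi> (hom s v) DD = 0", OF _ _ _ _ v])
  show "\<phi> (hom s 0) DD = 0" by (simp add: hom_zero phi_Z0 DD_in)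
next
  fix a b assume a: "a \<in> gr s" and b: "b \<in> gr s" and "\<phi> (hom s a) DD = 0" "\<phi> (hom s b) DD = 0"
  thus "\<phi> (hom s (a + b)) DD = 0" by (simp add: hom_add phi_add[OF hom_in[OF a] hom_in[OF b] DD_in])
next
  fix c a assume a: "a \<in> gr s" and "\<phi> (hom s a) DD = 0"
  thus "\<phi> (hom s (scale c a)) DD = 0" by (simp add: hom_scale phi_sc[OF hom_in[OF a] DD_in])
next
  fix p q x y z assume "x \<in> gr p" "y \<in> gr q" "z \<in> gr (s - p - q)"
  from BK_F[OF this] show "\<phi> (hom s (br (br x y) z)) DD = 0" by simp
qed

lemma kap_zero: assumes x: "x \<in> gr i" and y: "y \<in> gr (- i)" and nz: "B x y \<noteq> 0" shows "kap = 0"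
proof -
  have "B x y * kap = 0"
  proof (rule span_pair[where Q="\<lambda>v. B v y * kap = 0", OF _ _ _ _ x])
    show "B 0 y * kap = 0" by simp
  next
    fix a b assume h: "B a y * kap = 0" "B b y * kap = 0"
    have "B (a + b) y * kap = B a y * kap + B b y * kap" by (simp add: B_add distrib_right)
    thus "B (a + b) y * kap = 0" using h by simp
  next
    fix c a assume "B a y * kap = 0"
    thus "B (scale c a) y * kap = 0" by (simp add: B_scale)
  next
    fix p a b assume "a \<in> gr p" "b \<in> gr (i - p)"
    from BK_F[OF this y] show "B (br a b) y * kap = 0" by simp
  qed
  thus ?thesis using nz by simp
qed

lemma cen_kap: assumes x: "x \<in> gr a" and y: "y \<in> gr b" shows "cen a b x y * kap = 0"
proof (cases "a + b = 0 \<and> B x y \<noteq> 0")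
  case True
  hence "b = - a" by simp
  hence "y \<in> gr (- a)" using y by simp
  hence "kap = 0" using kap_zero[OF x] True by blast
  thus ?thesis by simp
next
  case False thus ?thesis by (auto simp: cen_def)
qed

lemma P1neq: assumes x: "x \<in> gr a" and y: "y \<in> gr b" and ab: "a \<noteq> b"
  shows "\<phi> (hom a x) (hom b y) = 0"
proof -
  have "(of_int b - of_int a) * \<phi> (hom a x) (hom b y) = \<phi> (brk (hom a x) (hom b y)) DD"
    by (rule R1[OF x y, symmetric])
  also have "\<dots> = \<phi> (hom (a + b) (br x y)) DD + cen a b x y * \<phi> KK DD"
    by (rule phi_hh1[OF x y DD_in])
  also have "\<dots> = 0" using psi_zero[OF gr_br[OF x y]] cen_kap[OF x y] by (simp add: kap_def)
  finally show ?thesis using ab by simp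
qed

lemma pick: "\<exists>p'. p' mod int n = p mod int n \<and> p' \<noteq> 0 \<and> p' \<noteq> a"
proof -
  have n: "int n > 0" using n_pos by simp
  have d: "(p \<noteq> 0 \<and> p \<noteq> a) \<or> (p + int n \<noteq> 0 \<and> p + int n \<noteq> a) \<or> (p + 2 * int n \<noteq> 0 \<and> p + 2 * int n \<noteq> a)"
    using n by arith
  have m1: "(p + int n) mod int n = p mod int n" by simp
  have m2: "(p + 2 * int n) mod int n = p mod int n" by simp
  from d show ?thesis
  proof (elim disjE)
    assume "p \<noteq> 0 \<and> p \<noteq> a" thus ?thesis by blast
  next
    assume "p + int n \<noteq> 0 \<and> p + int n \<noteq> a" thus ?thesis using m1 by blast
  next
    assume "p + 2 * int n \<noteq> 0 \<and> p + 2 * int n \<noteq> a" thus ?thesis using m2 by blast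
  qed
qed

lemma P1eq: assumes x: "x \<in> gr a" and y: "y \<in> gr a"
  shows "\<phi> (hom a x) (hom a y) = 0"
proof (rule span_pair[where Q="\<lambda>v. \<phi> (hom a v) (hom a y) = 0", OF _ _ _ _ x])
  show "\<phi> (hom a 0) (hom a y) = 0" by (simp add: hom_zero phi_Z0 hom_in[OF y])
next
  fix u v assume u: "u \<in> gr a" and v: "v \<in> gr a" and "\<phi> (hom a u) (hom a y) = 0" "\<phi> (hom a v) (hom a y) = 0"
  thus "\<phi> (hom a (u + v)) (hom a y) = 0" by (simp add: hom_add phi_add[OF hom_in[OF u] hom_in[OF v] hom_in[OF y]])
next
  fix c u assume u: "u \<in> gr a" and "\<phi> (hom a u) (hom a y) = 0"
  thus "\<phi> (hom a (scale c u)) (hom a y) = 0" by (simp add: hom_scale phi_sc[OF hom_in[OF u] hom_in[OF y]])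
next
  fix p x1 x2 assume x1: "x1 \<in> gr p" and x2: "x2 \<in> gr (a - p)"
  obtain p' where pp: "p' mod int n = p mod int n" and p0: "p' \<noteq> 0" and pa: "p' \<noteq> a" using pick by blast
  have "gr p' = gr p" using pp by (rule gr_mod)
  hence x1': "x1 \<in> gr p'" using x1 by simp
  have "(a - p') mod int n = (a - p) mod int n" by (rule mod_diff_cong[OF refl pp])
  hence "gr (a - p') = gr (a - p)" by (rule gr_mod)
  hence x2': "x2 \<in> gr (a - p')" using x2 by simp
  note u1 = hom_in[OF x1'] and u2 = hom_in[OF x2'] and w = hom_in[OF y]
  have h: "\<phi> (brk (hom p' x1) (hom (a - p') x2)) (hom a y) + \<phi> (brk (hom a y) (hom p' x1)) (hom (a - p') x2)
      + \<phi> (brk (hom (a - p') x2) (hom a y)) (hom p' x1) = 0"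
    by (rule phi_cyc[OF u1 u2 w])
  have 1: "\<phi> (brk (hom p' x1) (hom (a - p') x2)) (hom a y) = \<phi> (hom a (br x1 x2)) (hom a y)"
    using phi_hh1[OF x1' x2' w] P2[OF y] by simp
  have 2: "\<phi> (brk (hom a y) (hom p' x1)) (hom (a - p') x2) = 0"
    using phi_hh1[OF y x1' u2] P2[OF x2'] P1neq[OF gr_br[OF y x1'] x2'] p0 by simp
  have 3: "\<phi> (brk (hom (a - p') x2) (hom a y)) (hom p' x1) = 0"
    using phi_hh1[OF x2' y u1] P2[OF x1'] P1neq[OF gr_br[OF x2' y] x1'] pa by simp
  show "\<phi> (hom a (br x1 x2)) (hom a y) = 0" using h 1 2 3 by simp
qed

lemma P1: "x \<in> gr a \<Longrightarrow> y \<in> gr b \<Longrightarrow> \<phi> (hom a x) (hom b y) = 0"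
  using P1neq P1eq by (cases "a = b") auto

lemma homZ: assumes v: "v \<in> gr i" and Z: "Z \<in> L" shows "\<phi> (hom i v) Z = 0"
proof -
  obtain h c d where z: "Z = (h, c, d)" by (cases Z) auto
  have gh: "h l \<in> gr l" for l using Z by (simp add: z L_iff)
  have "\<phi> (hom i v) Z = \<phi> Z (hom i v)" by (rule phi_sym[OF hom_in[OF v] Z])
  also have "\<dots> = (\<Sum>l\<in>{l. h l \<noteq> 0}. \<phi> (hom l (h l)) (hom i v)) + c * \<phi> KK (hom i v) + d * \<phi> DD (hom i v)"
    unfolding z by (rule phi_expand[OF Z[unfolded z] hom_in[OF v]])
  also have "\<dots> = 0"
    using P1[OF gh v] P2[OF v] psi_zero[OF v] phi_sym[OF DD_in hom_in[OF v]] by simp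
  finally show ?thesis .
qed

lemma KZ: assumes k: "kap = 0" and kk: "\<phi> KK KK = 0" and Z: "Z \<in> L" shows "\<phi> KK Z = 0"
proof -
  obtain h c d where z: "Z = (h, c, d)" by (cases Z) auto
  have gh: "h l \<in> gr l" for l using Z by (simp add: z L_iff)
  have "\<phi> KK Z = \<phi> Z KK" by (rule phi_sym[OF KK_in Z])
  also have "\<dots> = (\<Sum>l\<in>{l. h l \<noteq> 0}. \<phi> (hom l (h l)) KK) + c * \<phi> KK KK + d * \<phi> DD KK"
    unfolding z by (rule phi_expand[OF Z[unfolded z] KK_in])
  also have "\<dots> = 0"
    using homZ[OF gh KK_in] kk k phi_sym[OF DD_in KK_in] by (simp add: kap_def)
  finally show ?thesis .
qed

lemma main: assumes X: "X \<in> L" and Y: "Y \<in> L" and Z: "Z \<in> L" shows "\<phi> (brk X Y) Z = 0"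
proof -
  obtain a c d where x: "X = (a, c, d)" by (cases X) auto
  obtain b c' d' where y: "Y = (b, c', d')" by (cases Y) auto
  have ga: "a i \<in> gr i" for i using X by (simp add: x L_iff)
  have gb: "b i \<in> gr i" for i using Y by (simp add: y L_iff)
  define cc where "cc = (\<Sum>i\<in>{i. a i \<noteq> 0}. of_int i * B (a i) (b (- i)))"
  obtain g where e: "brk X Y = (g, cc, 0)" by (simp add: x y aff_bracket_def cc_def)
  have inL: "(g, cc, 0) \<in> L" using brk_in[OF X Y] e by simp
  have gg: "g i \<in> gr i" for i using inL by (simp add: L_iff)
  have "\<phi> (brk X Y) Z = (\<Sum>i\<in>{i. g i \<noteq> 0}. \<phi> (hom i (g i)) Z) + cc * \<phi> KK Z + 0 * \<phi> DD Z"
    unfolding e by (rule phi_expand[OF inL Z])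
  also have "\<dots> = cc * \<phi> KK Z" using homZ[OF gg Z] by simp
  also have "\<dots> = 0"
  proof (cases "cc = 0")
    case True thus ?thesis by simp
  next
    case False
    then obtain i where "i \<in> {i. a i \<noteq> 0}" and nz: "of_int i * B (a i) (b (- i)) \<noteq> 0"
      unfolding cc_def by (meson sum.not_neutral_contains_not_neutral)
    hence i0: "i \<noteq> 0" and Bnz: "B (a i) (b (- i)) \<noteq> 0" by auto
    have k: "kap = 0" by (rule kap_zero[OF ga gb Bnz])
    have "\<phi> KK (brk (hom i (a i)) (hom (- i) (b (- i)))) = 0" by (rule L0[OF hom_in[OF ga] hom_in[OF gb]])
    hence "\<phi> KK (hom 0 (br (a i) (b (- i)))) + of_int i * B (a i) (b (- i)) * \<phi> KK KK = 0"
      using phi_hh2[OF ga gb KK_in] by (simp add: cen_def)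
    moreover have "\<phi> KK (hom 0 (br (a i) (b (- i)))) = 0" using P2[OF gr_br[OF ga gb, of i "- i"]] by simp
    ultimately have "\<phi> KK KK = 0" using nz by simp
    thus ?thesis using KZ[OF k _ Z] by simp
  qed
  finally show ?thesis .
qed

end


theorem theorem5p5:
  fixes scale :: "'k::field_char_0 \<Rightarrow> 'g::ab_group_add \<Rightarrow> 'g"
    and br :: "'g \<Rightarrow> 'g \<Rightarrow> 'g"
    and \<sigma> :: "'g \<Rightarrow> 'g" and n :: nat and \<epsilon> :: 'k
    and B :: "'g \<Rightarrow> 'g \<Rightarrow> 'k"
    and \<phi> :: "('g, 'k) aff \<Rightarrow> ('g, 'k) aff \<Rightarrow> 'k"
  assumes "alg_closed TYPE('k)"
    and "simple_fd_lie_algebra scale br"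
    and "diagram_automorphism scale br \<sigma> n"
    and "primitive_root \<epsilon> n"
    and "invariant_form scale br B"
    and "comm_2_cocycle (aff_carrier scale \<sigma> n \<epsilon>) aff_add (aff_scale scale) (aff_bracket scale br B) \<phi>"
  shows "\<forall>x\<in>aff_carrier scale \<sigma> n \<epsilon>. \<forall>y\<in>aff_carrier scale \<sigma> n \<epsilon>. \<forall>z\<in>aff_carrier scale \<sigma> n \<epsilon>.
           \<phi> (aff_bracket scale br B x y) z = 0"
proof -
  from assms(2) have la: "lie_algebra scale br" and sim: "\<forall>J. lie_ideal scale br J \<longrightarrow> J = {0} \<or> J = UNIV"
    and na: "\<exists>x y. br x y \<noteq> 0"
    unfolding simple_fd_lie_algebra_def by blast+
  from la have vs: "vector_space scale" unfolding lie_algebra_def by blast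
  from assms(3) have aut: "lie_automorphism scale br \<sigma>" and np: "n > 0" and sn: "\<sigma> ^^ n = id"
    unfolding diagram_automorphism_def by blast+
  have c1: "ctx scale br \<sigma> n \<epsilon> B"
    unfolding ctx_def ctx_axioms_def
    using vs la sim na aut np sn assms(4) assms(5)
    by (auto simp: lie_algebra_def lie_automorphism_def primitive_root_def invariant_form_def)
  have c2: "ctx2 scale br \<sigma> n \<epsilon> B \<phi>"
    unfolding ctx2_def ctx2_axioms_def using c1 assms(6) by blast
  interpret ctx2 scale br \<sigma> n \<epsilon> B \<phi> by (rule c2)
  show ?thesis using main by blast
qed

end
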